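(* Let $\alpha>-1$. For $z\in\mathbb{C}\setminus[0,\infty)$, as $n\to\infty$, $$\frac{L_n^{(\alpha)}(z)}{L_n^{(\alpha+1)}(z)}=\sqrt{\frac{-z}{n}}+\left(\frac{\alpha}{2}+\frac14+\frac z2\right)\frac1n+\mathcal{O}(n^{-3/2}),$$ uniformly on compact subsets of $\mathbb{C}\setminus[0,\infty)$.
   Context: $L_n^{(\alpha)}(z)=\binom{n+\alpha}{n}\,{}_1F_1(-n;\alpha+1;z)$ is the classical Laguerre polynomial. $\sqrt{-z}$ is the principal branch on $\mathbb{C}\setminus[0,\infty)$. *)

theory Defs
  imports "HOL-Analysis.Analysis"
begin

definition hyp1F1_neg :: "nat \<Rightarrow> complex \<Rightarrow> complex \<Rightarrow> complex" where
  "hyp1F1_neg n b z =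
     (\<Sum>k\<le>n. pochhammer (- of_nat n) k / pochhammer b k * z ^ k / of_nat (fact k))"

definition laguerre :: "nat \<Rightarrow> real \<Rightarrow> complex \<Rightarrow> complex" where
  "laguerre n \<alpha> z =
     ((of_nat n + complex_of_real \<alpha>) gchoose n) * hyp1F1_neg n (complex_of_real \<alpha> + 1) z"

end

theory Submission
  imports Defs
begin

definition cf :: "complex \<Rightarrow> nat \<Rightarrow> nat \<Rightarrow> complex" where
  "cf a n k = (if k \<le> n then ((of_nat n + a) gchoose (n - k)) / of_nat (fact k) else 0)"

definition PL :: "complex \<Rightarrow> nat \<Rightarrow> complex \<Rightarrow> complex" where
  "PL a n z = (\<Sum>k\<le>n. cf a n k * (-z) ^ k)"

lemma PL_ext: "n \<le> m \<Longrightarrow> PL a n z = (\<Sum>k\<le>m. cf a n k * (-z) ^ k)"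
proof -
  assume "n \<le> m"
  have "(\<Sum>k\<le>m. cf a n k * (-z) ^ k) = (\<Sum>k\<le>n. cf a n k * (-z) ^ k)"
    by (rule sum.mono_neutral_right) (use \<open>n \<le> m\<close> in \<open>auto simp: cf_def\<close>)
  thus ?thesis by (simp add: PL_def)
qed

lemma alg1: "(P::complex) \<noteq> 0 \<Longrightarrow> F \<noteq> 0 \<Longrightarrow> G \<noteq> 0 \<Longrightarrow> H \<noteq> 0 \<Longrightarrow>
  (P*Q/F) * (S*F/G / P * Z / H) = Q/G*(S*Z)/H"
  by (simp add: field_simps)

lemma alg2: "(A::complex) * B / C = A / C * B" by simp

lemma laguerre_PL:
  assumes "\<alpha> > -1"
  shows "laguerre n \<alpha> z = PL (of_real \<alpha>) n z"
proof -
  let ?a = "complex_of_real \<alpha>"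
  have poch_nz: "pochhammer (?a + 1) k \<noteq> 0" for k
  proof
    assume "pochhammer (?a + 1) k = 0"
    then obtain j where "?a + 1 = - of_nat j" by (auto simp: pochhammer_eq_0_iff)
    hence "\<alpha> + 1 = - real j" by (metis of_real_1 of_real_add of_real_eq_iff of_real_minus of_real_of_nat_eq)
    thus False using assms by simp
  qed
  have tm: "((of_nat n + ?a) gchoose n) * (pochhammer (- of_nat n) k / pochhammer (?a + 1) k * z ^ k / of_nat (fact k))
     = cf ?a n k * (-z) ^ k" if "k \<le> n" for k
  proof -
    have g1: "(of_nat n + ?a) gchoose n = pochhammer (?a + 1) n / fact n"
      by (simp add: gbinomial_pochhammer' add_ac)
    have g2: "(of_nat n + ?a) gchoose (n - k) = pochhammer (?a + 1 + of_nat k) (n - k) / fact (n - k)"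
      using that by (simp add: gbinomial_pochhammer' of_nat_diff add_ac)
    have pp: "pochhammer (?a + 1) n = pochhammer (?a + 1) k * pochhammer (?a + 1 + of_nat k) (n - k)"
      using pochhammer_product'[of "?a + 1" k "n - k"] that by simp
    have f: "fact n = fact (n - k) * pochhammer (of_nat (n - k) + 1 :: complex) k"
      using pochhammer_product[of "n-k" n "1::complex"] that
      by (simp add: pochhammer_fact add_ac)
    have pm: "pochhammer (- of_nat n :: complex) k = (-1) ^ k * fact n / fact (n - k)"
      using pochhammer_minus[of "of_nat n :: complex" k] that f
      by (simp add: of_nat_diff)
    have "((of_nat n + ?a) gchoose n) * (pochhammer (- of_nat n) k / pochhammer (?a + 1) k * z ^ k / of_nat (fact k))
      = (pochhammer (?a + 1 + of_nat k) (n - k) / fact (n - k)) * ((-1)^k * z ^ k) / of_nat (fact k)"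
      unfolding g1 pm pp using poch_nz[of k] by (rule alg1) simp_all
    also have "\<dots> = cf ?a n k * (-z) ^ k"
    proof -
      have "cf ?a n k * (-z)^k = (pochhammer (?a + 1 + of_nat k) (n - k) / fact (n - k)) / of_nat (fact k) * ((-1)^k * z^k)"
        unfolding cf_def if_P[OF that] g2 power_minus[of z k] by (rule refl)
      thus ?thesis by (simp only: alg2)
    qed
    finally show ?thesis .
  qed
  show ?thesis unfolding laguerre_def hyp1F1_neg_def PL_def sum_distrib_left
  proof (rule sum.cong[OF refl])
    fix k assume "k \<in> {..n}"
    thus "((of_nat n + ?a) gchoose n) * (pochhammer (- of_nat n) k / pochhammer (?a + 1) k * z ^ k / of_nat (fact k))
     = cf ?a n k * (-z) ^ k" by (intro tm) simp
  qed
qed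
lemma cf_diff: "cf (a+1) (Suc m) k - cf (a+1) m k = cf a (Suc m) k"
proof (cases "k \<le> m")
  case True
  have e1: "of_nat (Suc m) + (a + 1) = (of_nat m + (a + 1)) + 1" by simp
  have e2: "of_nat (Suc m) + a = of_nat m + (a + 1)" by simp
  have sk: "Suc m - k = Suc (m - k)" using True by simp
  define X where "X = of_nat m + (a + 1)"
  have L1: "cf (a+1) (Suc m) k = ((X + 1) gchoose Suc (m-k)) / fact k"
    unfolding cf_def e1 sk X_def using True by simp
  have L2: "cf (a+1) m k = (X gchoose (m-k)) / fact k"
    unfolding cf_def X_def using True by simp
  have L3: "cf a (Suc m) k = (X gchoose Suc (m-k)) / fact k"
    unfolding cf_def e2 sk X_def using True by simp
  show ?thesis unfolding L1 L2 L3 gbinomial_Suc_Suc add_divide_distrib by simp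
next
  case False
  show ?thesis
  proof (cases "k = Suc m")
    case True thus ?thesis by (simp add: cf_def)
  next
    case False
    thus ?thesis using \<open>\<not> k \<le> m\<close> by (simp add: cf_def)
  qed
qed

lemma PL_diff: "PL (a+1) (Suc m) z - PL (a+1) m z = PL a (Suc m) z"
proof -
  have "PL (a+1) m z = (\<Sum>k\<le>Suc m. cf (a+1) m k * (-z)^k)" by (rule PL_ext) simp
  hence "PL (a+1) (Suc m) z - PL (a+1) m z = (\<Sum>k\<le>Suc m. (cf (a+1) (Suc m) k - cf (a+1) m k) * (-z)^k)"
    by (simp add: PL_def sum_subtractf left_diff_distrib)
  also have "\<dots> = PL a (Suc m) z" by (simp add: cf_diff PL_def)
  finally show ?thesis .
qed

lemma cf_rec: "of_nat (Suc m) * cf a (Suc m) (Suc j) = (of_nat (Suc m) + a) * cf a m (Suc j) + cf (a+1) m j"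
proof (cases "j < m")
  case True
  define i where "i = m - Suc j"
  define X where "X = of_nat m + (a + 1)"
  have sk: "Suc m - Suc j = Suc i" and sk2: "m - j = Suc i" using True by (simp_all add: i_def)
  have e2: "of_nat (Suc m) + a = X" by (simp add: X_def)
  have e3: "of_nat m + a = X - 1" by (simp add: X_def)
  have L1: "cf a (Suc m) (Suc j) = (X gchoose Suc i) / fact (Suc j)"
    unfolding cf_def e2 sk using True by (simp add: algebra_simps)
  have L2: "cf a m (Suc j) = ((X - 1) gchoose i) / fact (Suc j)"
    unfolding cf_def e3 i_def using True by (simp add: algebra_simps)
  have L3: "cf (a+1) m j = (X gchoose Suc i) / fact j"
    unfolding cf_def sk2 X_def using True by simp
  have ab: "of_nat (Suc i) * (X gchoose Suc i) = X * ((X - 1) gchoose i)"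
    by (rule gbinomial_absorption)
  have nn: "of_nat (Suc m) = of_nat (Suc i) + (of_nat (Suc j) :: complex)"
    using True by (simp add: i_def of_nat_diff)
  have fs: "fact (Suc j) = of_nat (Suc j) * (fact j :: complex)" by simp
  have "(of_nat (Suc i) + of_nat (Suc j)) * ((X gchoose Suc i) / (of_nat (Suc j) * fact j))
      = X * ((X - 1) gchoose i) / (of_nat (Suc j) * fact j) + (X gchoose Suc i) / fact j"
    unfolding distrib_right add_divide_distrib ab[symmetric] using of_nat_neq_0[of j, where ?'a=complex] by simp
  thus ?thesis unfolding L1 L2 L3 e2 fs by (subst nn) (simp only: times_divide_eq_right)
next
  case False
  show ?thesis
  proof (cases "j = m")
    case True
    thus ?thesis using fact_nonzero[of "Suc m", where ?'a=complex] by (simp add: cf_def field_simps del: fact_Suc) (simp add: algebra_simps)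
  next
    case False
    thus ?thesis using \<open>\<not> j < m\<close> by (simp add: cf_def)
  qed
qed

lemma PL_rec: "of_nat (Suc m) * PL a (Suc m) z = (of_nat (Suc m) + a) * PL a m z - z * PL (a+1) m z"
proof -
  define D where "D k = (case k of 0 \<Rightarrow> 0 | Suc j \<Rightarrow> cf (a+1) m j)" for k
  have "z * PL (a+1) m z = - (\<Sum>k\<le>m. cf (a+1) m k * (-z)^(Suc k))"
    by (simp add: PL_def sum_distrib_left sum_negf algebra_simps)
  also have "(\<Sum>k\<le>m. cf (a+1) m k * (-z)^(Suc k)) = (\<Sum>k\<le>Suc m. D k * (-z)^k)"
    by (subst sum.atMost_Suc_shift) (simp add: D_def)
  finally have 1: "z * PL (a+1) m z = - (\<Sum>k\<le>Suc m. D k * (-z)^k)" .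
  have 2: "PL a m z = (\<Sum>k\<le>Suc m. cf a m k * (-z)^k)" by (rule PL_ext) simp
  have 3: "of_nat (Suc m) * cf a (Suc m) k = (of_nat (Suc m) + a) * cf a m k + D k" for k
  proof (cases k)
    case 0
    have "of_nat (Suc m) * ((of_nat (Suc m) + a) gchoose Suc m) = (of_nat (Suc m) + a) * ((of_nat m + a) gchoose m)"
      using gbinomial_absorption[of m "of_nat (Suc m) + a"] by (simp add: algebra_simps)
    thus ?thesis using 0 by (simp add: cf_def D_def)
  next
    case (Suc j) thus ?thesis using cf_rec[of m a j] by (simp add: D_def)
  qed
  have "(of_nat (Suc m) + a) * PL a m z - z * PL (a+1) m z
     = (\<Sum>k\<le>Suc m. ((of_nat (Suc m) + a) * cf a m k + D k) * (-z)^k)"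
    unfolding 1 2 by (simp only: sum_distrib_left sum.distrib distrib_right diff_minus_eq_add mult.assoc)
  also have "\<dots> = of_nat (Suc m) * PL a (Suc m) z"
    unfolding PL_def sum_distrib_left 3[symmetric] by (simp only: mult.assoc)
  finally show ?thesis by simp
qed
lemma three_term:
  "of_nat (Suc (Suc m)) * PL b (Suc (Suc m)) z
     = (2 * of_nat m + 3 + b - z) * PL b (Suc m) z - (of_nat m + 1 + b) * PL b m z"
proof -
  have d: "PL b (Suc k) z - PL b k z = PL (b - 1) (Suc k) z" for k
    using PL_diff[of "b - 1" k z] by simp
  have r: "of_nat (Suc (Suc m)) * PL (b-1) (Suc (Suc m)) z
     = (of_nat (Suc (Suc m)) + (b-1)) * PL (b-1) (Suc m) z - z * PL b (Suc m) z"
    using PL_rec[of "Suc m" "b - 1" z] by simp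
  have "of_nat (Suc (Suc m)) * (PL b (Suc (Suc m)) z - PL b (Suc m) z)
     = (of_nat (Suc (Suc m)) + (b-1)) * (PL b (Suc m) z - PL b m z) - z * PL b (Suc m) z"
    using r unfolding d .
  thus ?thesis by (simp add: algebra_simps)
qed

lemma PL_0: "PL b 0 z = 1" by (simp add: PL_def cf_def)
lemma PL_1: "PL b 1 z = 1 + b - z" by (simp add: PL_def cf_def)

lemma mcn: "z * cnj z = complex_of_real ((cmod z)\<^sup>2)"
  by (simp add: complex_mult_cnj cmod_power2)

lemma half_plane_step:
  fixes s g :: complex
  assumes "Re (cnj s * g) > 0" "Re s > 0"
  shows "1 + g \<noteq> 0" "Re (cnj s * (g / (1 + g))) > 0"
proof -
  show ng: "1 + g \<noteq> 0"
  proof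
    assume "1 + g = 0" hence "g = -1" by (simp add: add_eq_0_iff)
    thus False using assms by simp
  qed
  have gg: "g * cnj g = complex_of_real ((cmod g)\<^sup>2)" by (rule mcn)
  have "Re (cnj s * (g * cnj (1 + g))) = Re (cnj s * g) + Re s * (cmod g)\<^sup>2"
  proof -
    have "cnj s * (g * cnj (1 + g)) = cnj s * g + cnj s * (g * cnj g)" by (simp add: algebra_simps)
    thus ?thesis unfolding gg by simp
  qed
  also have "\<dots> > 0" using assms by (simp add: add_pos_nonneg)
  finally have pos: "Re (cnj s * (g * cnj (1 + g))) > 0" .
  have "g / (1 + g) = (g * cnj (1 + g)) / complex_of_real ((cmod (1+g))\<^sup>2)"
  proof -
    have "(1 + g) * cnj (1 + g) = complex_of_real ((cmod (1+g))\<^sup>2)" by (rule mcn)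
    moreover have "(cmod (1+g))\<^sup>2 \<noteq> 0" using ng by simp
    moreover have "g / (1 + g) = (g * cnj (1 + g)) / ((1 + g) * cnj (1 + g))"
    proof -
      have cz: "cnj (1 + g) \<noteq> 0" using ng complex_cnj_zero_iff by blast
      show ?thesis by (rule mult_divide_mult_cancel_right[OF cz, symmetric])
    qed
    ultimately show ?thesis by simp
  qed
  hence "Re (cnj s * (g / (1 + g))) = Re (cnj s * (g * cnj (1 + g))) / (cmod (1+g))\<^sup>2"
    by (simp add: Re_divide_of_real)
  thus "Re (cnj s * (g / (1 + g))) > 0" using pos ng by simp
qed

lemma invariant:
  fixes s z :: complex and \<beta> :: real
  assumes s: "Re s > 0" "s\<^sup>2 = - z" and \<beta>: "\<beta> > 0"
  shows "PL (of_real \<beta>) n z \<noteq> 0 \<and> PL (of_real \<beta>) (Suc n) z \<noteq> 0 \<and>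
         Re (cnj s * (PL (of_real \<beta>) (Suc n) z / PL (of_real \<beta>) n z - 1)) > 0"
proof (induction n)
  case 0
  have "Re (cnj s * (of_real \<beta> + s\<^sup>2)) = \<beta> * Re s + Re s * (cmod s)\<^sup>2"
  proof -
    have "cnj s * (of_real \<beta> + s\<^sup>2) = of_real \<beta> * cnj s + (s * cnj s) * s"
      by (simp add: algebra_simps power2_eq_square)
    thus ?thesis by (simp add: mcn)
  qed
  also have "\<dots> > 0" using s \<beta> by (simp add: add_pos_nonneg)
  finally have pos: "Re (cnj s * (of_real \<beta> + s\<^sup>2)) > 0" .
  have h1: "PL (of_real \<beta>) (Suc 0) z / PL (of_real \<beta>) 0 z - 1 = of_real \<beta> + s\<^sup>2"
    using PL_1[of "of_real \<beta>" z] by (simp add: PL_0 s)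
  have nz: "PL (of_real \<beta>) (Suc 0) z \<noteq> 0"
  proof
    assume "PL (of_real \<beta>) (Suc 0) z = 0"
    hence "of_real \<beta> + s\<^sup>2 = -1" using h1 by (simp add: PL_0)
    thus False using pos s by simp
  qed
  show ?case using pos nz h1 by (simp add: PL_0)
next
  case (Suc m)
  define b where "b = complex_of_real \<beta>"
  define p0 where "p0 = PL b m z"
  define p1 where "p1 = PL b (Suc m) z"
  define p2 where "p2 = PL b (Suc (Suc m)) z"
  have p0: "p0 \<noteq> 0" and p1: "p1 \<noteq> 0" and inv: "Re (cnj s * (p1 / p0 - 1)) > 0"
    using Suc.IH by (simp_all add: p0_def p1_def b_def)
  define g where "g = p1 / p0 - 1"
  have hs: "1 + g \<noteq> 0" "Re (cnj s * (g / (1 + g))) > 0"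
    using half_plane_step[of s g] inv s by (simp_all add: g_def)
  define Bv where "Bv = real m + 1 + \<beta>"
  have Bv: "Bv > 0" using \<beta> by (simp add: Bv_def)
  have tt: "of_nat (Suc (Suc m)) * p2 = (2 * of_nat m + 3 + b - z) * p1 - (of_nat m + 1 + b) * p0"
    unfolding p0_def p1_def p2_def by (rule three_term)
  have key: "p2 / p1 - 1 = (of_real Bv * (g / (1 + g)) + s\<^sup>2) / of_nat (Suc (Suc m))"
  proof -
    have "1 + g = p1 / p0" by (simp add: g_def)
    hence gq: "g / (1 + g) = (p1 - p0) / p1" using p0 p1 by (simp add: g_def field_simps)
    have e: "of_nat (Suc (Suc m)) * (p2 - p1) = of_real Bv * (p1 - p0) - z * p1"
      using tt by (simp add: Bv_def b_def algebra_simps)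
    have nz2: "(of_nat (Suc (Suc m)) :: complex) \<noteq> 0" by (rule of_nat_neq_0)
    have "(of_real Bv * ((p1 - p0) / p1) + s\<^sup>2) / of_nat (Suc (Suc m))
       = (of_real Bv * (p1 - p0) - z * p1) / (of_nat (Suc (Suc m)) * p1)"
      using p1 nz2 s(2) by (simp add: field_simps)
    also have "\<dots> = p2 / p1 - 1" unfolding e[symmetric]
      using mult_divide_mult_cancel_left[OF nz2, of "p2 - p1" p1] p1 by (simp add: diff_divide_distrib)
    finally show ?thesis unfolding gq by simp
  qed
  have pos: "Re (cnj s * (p2 / p1 - 1)) > 0"
  proof -
    define q where "q = cnj s * (g / (1 + g))"
    have "Re (cnj s * (p2 / p1 - 1)) = (Bv * Re q + Re s * (cmod s)\<^sup>2) / real (Suc (Suc m))"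
    proof -
      have "cnj s * (p2 / p1 - 1) = (of_real Bv * q + (s * cnj s) * s) / of_nat (Suc (Suc m))"
        unfolding key q_def by (simp add: algebra_simps power2_eq_square)
      hence "cnj s * (p2 / p1 - 1) = (of_real Bv * q + of_real ((cmod s)\<^sup>2) * s) / of_nat (Suc (Suc m))"
        by (simp only: mcn)
      thus ?thesis by (simp add: mult.commute)
    qed
    also have "\<dots> > 0" using Bv hs s unfolding q_def by (intro divide_pos_pos add_pos_nonneg mult_pos_pos) auto
    finally show ?thesis .
  qed
  have p2: "p2 \<noteq> 0"
  proof
    assume "p2 = 0"
    thus False using pos s by simp
  qed
  show ?case using p1 p2 pos by (simp add: p1_def p2_def b_def)
qed

lemma dfacts:
  fixes x y :: real
  assumes x: "0 < x" and y: "0 < y" and rel: "y\<^sup>2 - x\<^sup>2 = x\<^sup>2 * y\<^sup>2" and xs: "x\<^sup>2 \<le> 1/2"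
  shows "x \<le> y" "y\<^sup>2 \<le> 2 * x\<^sup>2" "y - x \<le> x^3" "\<bar>x^3/2 - (y - x)\<bar> \<le> x^5"
proof -
  have "x\<^sup>2 * y\<^sup>2 \<ge> 0" by simp
  hence "x\<^sup>2 \<le> y\<^sup>2" using rel by linarith
  thus xy: "x \<le> y" using power2_le_imp_le[of x y] y by simp
  have "y\<^sup>2 * (1 - x\<^sup>2) = x\<^sup>2" using rel by (simp add: algebra_simps)
  moreover have "y\<^sup>2 * (1 - x\<^sup>2) \<ge> y\<^sup>2 * (1/2)" using xs by (intro mult_left_mono) auto
  ultimately show y2: "y\<^sup>2 \<le> 2 * x\<^sup>2" by simp
  define d where "d = y - x"
  have dxy: "d * (x + y) = x\<^sup>2 * y\<^sup>2" using rel by (simp add: d_def power2_eq_square algebra_simps)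
  have d0: "d \<ge> 0" using xy by (simp add: d_def)
  have "d * (2 * x) \<le> d * (x + y)" using d0 xy by (intro mult_left_mono) auto
  also have "\<dots> = x\<^sup>2 * y\<^sup>2" by (rule dxy)
  also have "\<dots> \<le> x\<^sup>2 * (2 * x\<^sup>2)" using y2 by (intro mult_left_mono) auto
  finally have "d * (2 * x) \<le> x^3 * (2 * x)" by (simp add: power2_eq_square power3_eq_cube algebra_simps)
  hence dx3: "d \<le> x^3" using x by simp
  thus "y - x \<le> x^3" by (simp add: d_def)
  have eq: "(d - x^3/2) * (2 * (x + y)) = x\<^sup>2 * d * (2 * y + x)"
  proof -
    have "(d - x^3/2) * (2 * (x + y)) = 2 * (d * (x + y)) - x^3 * (x + y)" by (simp add: algebra_simps)
    also have "\<dots> = 2 * x\<^sup>2 * y\<^sup>2 - x^3 * (x + y)" by (simp add: dxy)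
    also have "\<dots> = x\<^sup>2 * d * (2 * y + x)" by (simp add: d_def power2_eq_square power3_eq_cube algebra_simps)
    finally show ?thesis .
  qed
  have "\<bar>d - x^3/2\<bar> * (2 * (x + y)) = \<bar>(d - x^3/2) * (2 * (x + y))\<bar>"
    using x y by (simp add: abs_mult)
  also have "\<dots> = \<bar>x\<^sup>2 * d * (2 * y + x)\<bar>" by (simp only: eq)
  also have "\<dots> = x\<^sup>2 * d * (2 * y + x)" using x y d0 by simp
  also have "\<dots> \<le> x\<^sup>2 * d * (2 * (x + y))" using x y d0 by (intro mult_left_mono) auto
  finally have "\<bar>d - x^3/2\<bar> \<le> x\<^sup>2 * d" using x y by simp
  also have "\<dots> \<le> x\<^sup>2 * x^3" using dx3 by (intro mult_left_mono) auto
  finally show "\<bar>x^3/2 - (y - x)\<bar> \<le> x^5" by (simp add: d_def abs_minus_commute power_add[symmetric])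
qed

definition cc :: "complex \<Rightarrow> real \<Rightarrow> complex" where
  "cc s \<beta> = (s^2 + of_real \<beta> - 1/2) / 2"
definition aa :: "complex \<Rightarrow> real \<Rightarrow> real \<Rightarrow> complex" where
  "aa s \<beta> t = 1 + s * of_real t + cc s \<beta> * (of_real t)^2"
definition Tm :: "complex \<Rightarrow> real \<Rightarrow> nat \<Rightarrow> complex \<Rightarrow> complex" where
  "Tm s \<beta> n h = (2 * of_nat n - 1 + of_real \<beta> + s^2 - (of_nat n - 1 + of_real \<beta>) / h) / of_nat n"

lemma cc_neg [simp]: "cc (-s) \<beta> = cc s \<beta>" by (simp add: cc_def)

lemma E0_identity:
  fixes s :: complex and \<beta> x y :: real
  defines "c \<equiv> cc s \<beta>"
  defines "q \<equiv> c - of_real \<beta> - s^2 + 1"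
  defines "X \<equiv> complex_of_real x"
  defines "Y \<equiv> complex_of_real y"
  shows "aa s \<beta> x * aa s \<beta> y - (2 + (of_real \<beta> + s^2 - 1) * X^2) * aa s \<beta> y + 1 + (of_real \<beta> - 1) * X^2
    = (1/2 - of_real \<beta>) * X * (Y - X) - c * (Y - X)^2 + s * (X^3/2 - (Y - X)) + s * (2*c+q) * X^2 * (Y - X)
      + s * c * X * (Y - X)^2 + q * c * X^2 * Y^2"
  unfolding aa_def q_def c_def cc_def X_def Y_def by (simp add: field_simps power2_eq_square power3_eq_cube)
definition Ccb :: "real \<Rightarrow> real \<Rightarrow> real" where "Ccb S \<beta> = (S^2 + \<beta> + 1) / 2"
definition Qb :: "real \<Rightarrow> real \<Rightarrow> real" where "Qb S \<beta> = Ccb S \<beta> + \<beta> + S^2 + 1"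
definition Kr :: "real \<Rightarrow> real \<Rightarrow> real" where
  "Kr S \<beta> = 2 * (\<bar>1/2 - \<beta>\<bar> + Ccb S \<beta> + S + S * (2 * Ccb S \<beta> + Qb S \<beta>) + S * Ccb S \<beta> + 2 * Qb S \<beta> * Ccb S \<beta>)"

lemma cc_bound: assumes "cmod s \<le> S" "\<beta> > 0" shows "cmod (cc s \<beta>) \<le> Ccb S \<beta>"
proof -
  have "cmod (s^2 + of_real \<beta> - 1/2) \<le> cmod (s^2) + cmod (of_real \<beta>) + cmod (1/2 :: complex)"
    using norm_triangle_ineq4[of "s^2 + of_real \<beta>" "1/2::complex"] norm_triangle_ineq[of "s^2" "of_real \<beta>::complex"]
    by linarith
  also have "\<dots> \<le> S^2 + \<beta> + 1"
  proof -
    have "(cmod s)^2 \<le> S^2" using assms norm_ge_zero[of s] by (intro power_mono) auto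
    thus ?thesis using assms by (simp add: norm_power)
  qed
  finally show ?thesis unfolding cc_def Ccb_def by (simp add: norm_divide)
qed

lemma q_bound: assumes "cmod s \<le> S" "\<beta> > 0"
  shows "cmod (cc s \<beta> - of_real \<beta> - s^2 + 1) \<le> Qb S \<beta>"
proof -
  have "cmod (cc s \<beta> - of_real \<beta> - s^2 + 1) \<le> cmod (cc s \<beta>) + cmod (of_real \<beta> :: complex) + cmod (s^2) + 1"
    using norm_triangle_ineq[of "cc s \<beta> - of_real \<beta> - s^2" 1] norm_triangle_ineq4[of "cc s \<beta> - of_real \<beta>" "s^2"]
      norm_triangle_ineq4[of "cc s \<beta>" "of_real \<beta>"] by simp
  also have "\<dots> \<le> Ccb S \<beta> + \<beta> + S^2 + 1" using assms cc_bound[OF assms] norm_ge_zero[of s]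
    by (intro add_mono) (simp_all add: norm_power power_mono)
  finally show ?thesis by (simp add: Qb_def)
qed

lemma Ccb_nonneg: "\<beta> > 0 \<Longrightarrow> Ccb S \<beta> \<ge> 0" by (simp add: Ccb_def add_nonneg_pos)
lemma Qb_nonneg: "\<beta> > 0 \<Longrightarrow> Qb S \<beta> \<ge> 0" using Ccb_nonneg[of \<beta> S] by (simp add: Qb_def add_nonneg_pos)
lemma residual:
  fixes s :: complex and \<beta> S x y :: real and n :: nat
  assumes n2: "n \<ge> 2" and S: "cmod s \<le> S" and \<beta>: "\<beta> > 0"
    and xdef: "x = 1 / sqrt (real n)" and ydef: "y = 1 / sqrt (real n - 1)"
    and xs: "x \<le> 1/2" and ay: "cmod (aa s \<beta> y) \<ge> 1/2"
  shows "cmod (Tm s \<beta> n (aa s \<beta> y) - aa s \<beta> x) \<le> Kr S \<beta> * x^4"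
proof -
  have npos: "real n > 0" "real n - 1 > 0" using n2 by auto
  have x0: "x > 0" using npos by (simp add: xdef)
  have y0: "y > 0" using npos by (simp add: ydef)
  have x2: "x\<^sup>2 = 1 / real n" using npos by (simp add: xdef power_divide)
  have y2: "y\<^sup>2 = 1 / (real n - 1)" using npos by (simp add: ydef power_divide)
  have rel: "y\<^sup>2 - x\<^sup>2 = x\<^sup>2 * y\<^sup>2" unfolding x2 y2 using npos by (simp add: field_simps)
  have xs2: "x\<^sup>2 \<le> 1/2" unfolding x2 using n2 by (simp add: field_simps)
  note df = dfacts[OF x0 y0 rel xs2]
  define d where "d = y - x"
  have d0: "0 \<le> d" and d3: "d \<le> x^3" and e5: "\<bar>x^3/2 - d\<bar> \<le> x^5" and yy: "y\<^sup>2 \<le> 2 * x\<^sup>2"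
    using df by (auto simp: d_def)
  define c where "c = cc s \<beta>"
  define q where "q = c - of_real \<beta> - s^2 + 1"
  define X where "X = complex_of_real x"
  define Y where "Y = complex_of_real y"
  define a' where "a' = aa s \<beta> y"
  define E0 where "E0 = aa s \<beta> x * a' - (2 + (of_real \<beta> + s^2 - 1) * X^2) * a' + 1 + (of_real \<beta> - 1) * X^2"
  have a'0: "a' \<noteq> 0" using ay by (auto simp: a'_def)
  have X0: "X \<noteq> 0" using x0 by (simp add: X_def)
  have nX: "(of_nat n :: complex) = 1 / X^2"
  proof -
    have "real n = 1 / x^2" using x2 npos by simp
    hence "complex_of_real (real n) = complex_of_real (1 / x^2)" by simp
    thus ?thesis by (simp add: X_def)
  qed
  have Tq: "Tm s \<beta> n a' - aa s \<beta> x = - E0 / a'"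
    unfolding Tm_def nX E0_def using X0 a'0 by (simp add: field_simps)
  have E0eq: "E0 = (1/2 - of_real \<beta>) * X * (Y - X) - c * (Y - X)^2 + s * (X^3/2 - (Y - X)) + s * (2*c+q) * X^2 * (Y - X)
      + s * c * X * (Y - X)^2 + q * c * X^2 * Y^2"
    unfolding E0_def a'_def c_def q_def X_def Y_def by (rule E0_identity)
  have cb: "cmod c \<le> Ccb S \<beta>" unfolding c_def by (rule cc_bound[OF S \<beta>])
  have qb: "cmod q \<le> Qb S \<beta>" unfolding q_def c_def by (rule q_bound[OF S \<beta>])
  have cq: "cmod (2*c+q) \<le> 2 * Ccb S \<beta> + Qb S \<beta>"
    using norm_triangle_ineq[of "2*c" q] cb qb by (simp add: norm_mult)
  have S0: "S \<ge> 0" using S norm_ge_zero[of s] by linarith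
  have Cc0: "Ccb S \<beta> \<ge> 0" and Qb0: "Qb S \<beta> \<ge> 0" using Ccb_nonneg Qb_nonneg \<beta> by auto
  have YX: "Y - X = of_real d" by (simp add: d_def X_def Y_def)
  have e3: "X^3/2 - (Y - X) = of_real (x^3/2 - d)" by (simp add: d_def X_def Y_def)
  have x1: "x \<le> 1" using xs by simp
  have px: "x^k \<le> x^j" if "j \<le> k" for j k using x0 x1 that by (simp add: power_decreasing)
  have p4: "x * x^3 = x^4" and p6: "(x^3)^2 = x^6" and p7: "x * (x^3)^2 = x^7" and p5: "x^2 * x^3 = x^5"
    and p22: "x^2 * (2 * x^2) = 2 * x^4"
    by (simp_all add: eval_nat_numeral algebra_simps)
  have t1: "cmod ((1/2 - of_real \<beta>) * X * (Y - X)) \<le> \<bar>1/2 - \<beta>\<bar> * x^4"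
  proof -
    have "cmod ((1/2 - of_real \<beta>) * X * (Y - X)) = \<bar>1/2 - \<beta>\<bar> * (x * d)"
    proof -
      have hb: "(1/2 - complex_of_real \<beta>) = of_real (1/2 - \<beta>)" by simp
      show ?thesis unfolding YX hb unfolding X_def using x0 d0 by (simp only: norm_mult norm_of_real)
    qed
    also have "\<dots> \<le> \<bar>1/2 - \<beta>\<bar> * (x * x^3)" using d3 x0 by (intro mult_left_mono) auto
    finally show ?thesis by (simp only: p4)
  qed
  have t2: "cmod (c * (Y - X)^2) \<le> Ccb S \<beta> * x^4"
  proof -
    have "cmod (c * (Y - X)^2) = cmod c * d^2" unfolding YX using d0 by (simp add: norm_mult norm_power)
    also have "\<dots> \<le> Ccb S \<beta> * (x^3)^2" using cb d0 d3 Cc0 by (intro mult_mono power_mono) auto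
    also have "\<dots> \<le> Ccb S \<beta> * x^4" unfolding p6 using Cc0 px[of 4 6] by (intro mult_left_mono) auto
    finally show ?thesis .
  qed
  have t3: "cmod (s * (X^3/2 - (Y - X))) \<le> S * x^4"
  proof -
    have "cmod (s * (X^3/2 - (Y - X))) = cmod s * \<bar>x^3/2 - d\<bar>" unfolding e3 by (simp only: norm_mult norm_of_real)
    also have "\<dots> \<le> S * x^5" using S e5 S0 by (intro mult_mono) auto
    also have "\<dots> \<le> S * x^4" using S0 px[of 4 5] by (intro mult_left_mono) auto
    finally show ?thesis .
  qed
  have t4: "cmod (s * (2*c+q) * X^2 * (Y - X)) \<le> S * (2 * Ccb S \<beta> + Qb S \<beta>) * x^4"
  proof -
    have "cmod (s * (2*c+q) * X^2 * (Y - X)) = cmod s * cmod (2*c+q) * (x^2 * d)"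
      unfolding YX unfolding X_def using d0 by (simp add: norm_mult norm_power)
    also have "\<dots> \<le> S * (2 * Ccb S \<beta> + Qb S \<beta>) * (x^2 * x^3)"
      using S cq d0 d3 x0 S0 Cc0 Qb0 by (intro mult_mono) auto
    also have "\<dots> \<le> S * (2 * Ccb S \<beta> + Qb S \<beta>) * x^4"
      unfolding p5 using S0 Cc0 Qb0 px[of 4 5] by (intro mult_left_mono) auto
    finally show ?thesis .
  qed
  have t5: "cmod (s * c * X * (Y - X)^2) \<le> S * Ccb S \<beta> * x^4"
  proof -
    have "cmod (s * c * X * (Y - X)^2) = cmod s * cmod c * (x * d^2)"
      unfolding YX unfolding X_def using d0 x0 by (simp add: norm_mult norm_power)
    also have "\<dots> \<le> S * Ccb S \<beta> * (x * (x^3)^2)"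
      using S cb d0 d3 x0 S0 Cc0 by (intro mult_mono power_mono) auto
    also have "\<dots> \<le> S * Ccb S \<beta> * x^4"
      unfolding p7 using S0 Cc0 px[of 4 7] by (intro mult_left_mono) auto
    finally show ?thesis .
  qed
  have t6: "cmod (q * c * X^2 * Y^2) \<le> 2 * Qb S \<beta> * Ccb S \<beta> * x^4"
  proof -
    have "cmod (q * c * X^2 * Y^2) = cmod q * cmod c * (x^2 * y^2)"
      unfolding X_def Y_def by (simp add: norm_mult norm_power)
    also have "\<dots> \<le> Qb S \<beta> * Ccb S \<beta> * (x^2 * (2 * x^2))"
      using qb cb yy Qb0 Cc0 by (intro mult_mono) auto
    finally show ?thesis unfolding p22 by (simp add: mult_ac)
  qed
  have "cmod E0 \<le> \<bar>1/2 - \<beta>\<bar> * x^4 + Ccb S \<beta> * x^4 + S * x^4 + S * (2 * Ccb S \<beta> + Qb S \<beta>) * x^4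
      + S * Ccb S \<beta> * x^4 + 2 * Qb S \<beta> * Ccb S \<beta> * x^4"
    unfolding E0eq using t1 t2 t3 t4 t5 t6
    by (smt (verit) norm_triangle_ineq norm_triangle_ineq4)
  hence E0b: "cmod E0 \<le> (Kr S \<beta> / 2) * x^4" by (simp add: Kr_def algebra_simps)
  have "cmod (Tm s \<beta> n a' - aa s \<beta> x) = cmod E0 / cmod a'" unfolding Tq by (simp add: norm_divide)
  also have "\<dots> \<le> cmod E0 / (1/2)" using ay a'0 by (intro divide_left_mono) (auto simp: a'_def)
  also have "\<dots> \<le> Kr S \<beta> * x^4" using E0b by simp
  finally show ?thesis by (simp add: a'_def)
qed
lemma a_close:
  assumes "0 \<le> t" "t \<le> 1" "cmod s \<le> S" "\<beta> > 0" "(S + Ccb S \<beta>) * t \<le> 1/2"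
  shows "cmod (aa s \<beta> t - 1) \<le> 1/2"
proof -
  have "cmod (aa s \<beta> t - 1) \<le> cmod s * t + cmod (cc s \<beta>) * t^2"
    unfolding aa_def using norm_triangle_ineq[of "s * of_real t" "cc s \<beta> * (of_real t)^2"] assms(1)
    by (simp add: norm_mult norm_power)
  also have S0: "S \<ge> 0" using assms(3) norm_ge_zero[of s] by linarith
  have "cmod s * t + cmod (cc s \<beta>) * t^2 \<le> S * t + Ccb S \<beta> * t"
  proof (intro add_mono mult_mono)
    show "t^2 \<le> t" using assms by (simp add: power2_eq_square mult_left_le)
  qed (use assms cc_bound[OF assms(3,4)] Ccb_nonneg[of \<beta> S] S0 in auto)
  finally have "cmod (aa s \<beta> t - 1) \<le> S * t + Ccb S \<beta> * t" .
  also have "\<dots> \<le> 1/2" using assms by (simp add: algebra_simps)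
  finally show ?thesis .
qed

lemma a_bounds:
  assumes "0 \<le> t" "t \<le> 1" "cmod s \<le> S" "\<beta> > 0" "(S + Ccb S \<beta>) * t \<le> 1/2"
  shows "cmod (aa s \<beta> t) \<ge> 1/2" "cmod (aa s \<beta> t) \<le> 3/2"
proof -
  have h: "cmod (aa s \<beta> t - 1) \<le> 1/2" by (rule a_close[OF assms])
  show "cmod (aa s \<beta> t) \<ge> 1/2" using h norm_triangle_ineq3[of "aa s \<beta> t" 1] by simp
  show "cmod (aa s \<beta> t) \<le> 3/2" using h norm_triangle_ineq[of "aa s \<beta> t - 1" 1] by simp
qed

lemma Re_cnj_le: "Re (cnj s * v) \<le> cmod s * cmod v"
  using complex_Re_le_cmod[of "cnj s * v"] by (simp add: norm_mult)

lemma dist_b: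
  assumes inv: "Re (cnj s * (h - 1)) > 0" and sig: "\<sigma> \<le> Re s" "\<sigma> > 0" and S: "cmod s \<le> S"
    and \<beta>: "\<beta> > 0" and t: "0 < t" and ct: "Ccb S \<beta> * t \<le> \<sigma> / 2"
  shows "cmod (h - aa (-s) \<beta> t) \<ge> cmod s * t / 2"
proof -
  define c where "c = cc s \<beta>"
  have cb: "cmod c \<le> Ccb S \<beta>" unfolding c_def by (rule cc_bound[OF S \<beta>])
  have sRe: "Re s \<le> cmod s" by (rule complex_Re_le_cmod)
  have s0: "cmod s > 0" using sig sRe by linarith
  have v: "h - aa (-s) \<beta> t = (h - 1) + s * of_real t - c * of_real (t^2)"
    by (simp add: aa_def c_def)
  have ss: "Re (cnj s * (s * of_real t)) = (cmod s)^2 * t"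
    unfolding cmod_power2 by (simp add: power2_eq_square algebra_simps)
  have cs: "Re (cnj s * (c * of_real (t^2))) \<le> cmod s * (cmod s / 2) * t"
  proof -
    have "Re (cnj s * (c * of_real (t^2))) \<le> cmod s * cmod (c * of_real (t^2))" by (rule Re_cnj_le)
    also have "\<dots> = cmod s * (cmod c * t * t)" by (simp add: norm_mult power2_eq_square)
    also have "\<dots> \<le> cmod s * ((cmod s / 2) * t)"
    proof (intro mult_left_mono)
      have "cmod c * t \<le> Ccb S \<beta> * t" using cb t by (intro mult_right_mono) auto
      also have "\<dots> \<le> cmod s / 2" using ct sig sRe by linarith
      finally show "cmod c * t * t \<le> cmod s / 2 * t" using t by (intro mult_right_mono) auto
    qed simp
    finally show ?thesis by (simp add: mult_ac)
  qed
  have "Re (cnj s * (h - aa (-s) \<beta> t)) = Re (cnj s * (h - 1)) + (cmod s)^2 * t - Re (cnj s * (c * of_real (t^2)))"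
    unfolding v ss[symmetric] by (simp add: algebra_simps)
  also have "\<dots> > cmod s * (cmod s * t / 2)" using inv cs by (simp add: power2_eq_square algebra_simps)
  finally have "cmod s * (cmod s * t / 2) < cmod s * cmod (h - aa (-s) \<beta> t)"
    using Re_cnj_le[of s "h - aa (-s) \<beta> t"] by linarith
  thus ?thesis using s0 by simp
qed

lemma norm_sum_diff_sq: "(cmod (p + q))^2 - (cmod (p - q))^2 = 4 * Re (cnj p * q)"
  unfolding cmod_power2 by (simp add: power2_eq_square algebra_simps)

lemma ratio_ab:
  assumes t: "0 < t" "t \<le> 1" and S: "cmod s \<le> S" and \<beta>: "\<beta> > 0"
    and st: "(S + Ccb S \<beta>) * t \<le> 1/2" and ct: "Ccb S \<beta> * S * t^2 \<le> \<sigma> / 2"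
    and sig: "\<sigma> \<le> Re s" "0 < \<sigma>" "\<sigma> \<le> 1"
  shows "cmod (aa (-s) \<beta> t) \<le> (1 - \<sigma> * t / 4) * cmod (aa s \<beta> t)"
proof -
  define c where "c = cc s \<beta>"
  define p where "p = 1 + c * of_real (t^2)"
  have cb: "cmod c \<le> Ccb S \<beta>" unfolding c_def by (rule cc_bound[OF S \<beta>])
  have ea: "aa s \<beta> t = p + s * of_real t" by (simp add: aa_def p_def c_def)
  have eb: "aa (-s) \<beta> t = p - s * of_real t" by (simp add: aa_def p_def c_def)
  have "Re (cnj p * s) = Re s + t^2 * Re (cnj c * s)" by (simp add: p_def algebra_simps)
  moreover have "Re (cnj c * s) \<ge> - (Ccb S \<beta> * S)"
  proof -
    have "- Re (cnj c * s) \<le> cmod (cnj c * s)" using abs_Re_le_cmod[of "cnj c * s"] by linarith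
    also have "\<dots> \<le> Ccb S \<beta> * S" using cb S by (simp add: norm_mult mult_mono Ccb_nonneg[OF \<beta>])
    finally show ?thesis by linarith
  qed
  ultimately have "Re (cnj p * s) \<ge> Re s - t^2 * (Ccb S \<beta> * S)"
    using mult_left_mono[of "- (Ccb S \<beta> * S)" "Re (cnj c * s)" "t^2"] by simp
  hence pRe: "Re (cnj p * s) \<ge> \<sigma> / 2" using ct sig by (simp add: mult_ac)
  have diff: "(cmod (aa s \<beta> t))^2 - (cmod (aa (-s) \<beta> t))^2 = 4 * t * Re (cnj p * s)"
    unfolding ea eb norm_sum_diff_sq by (simp add: algebra_simps)
  have "4 * t * Re (cnj p * s) \<ge> 4 * t * (\<sigma>/2)" using pRe t by (intro mult_left_mono) auto
  moreover have "4 * t * (\<sigma>/2) = 2 * \<sigma> * t" by simp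
  ultimately have d2: "(cmod (aa (-s) \<beta> t))^2 \<le> (cmod (aa s \<beta> t))^2 - 2 * \<sigma> * t" using diff by linarith
  have A: "cmod (aa s \<beta> t) \<le> 3/2" using a_bounds(2)[of t s S \<beta>] t S \<beta> st by auto
  have A2: "(cmod (aa s \<beta> t))^2 \<le> 4"
  proof -
    have "(cmod (aa s \<beta> t))^2 \<le> (3/2)^2" by (rule power_mono[OF A norm_ge_zero])
    moreover have "(3/2::real)^2 \<le> 4" by (simp add: power2_eq_square)
    ultimately show ?thesis by linarith
  qed
  have "(cmod (aa s \<beta> t))^2 - 2 * \<sigma> * t \<le> (cmod (aa s \<beta> t))^2 * (1 - \<sigma> * t / 4)^2"
  proof -
    define A where "A = (cmod (aa s \<beta> t))^2"
    define u where "u = \<sigma> * t"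
    have m: "A * (u / 2) \<le> 4 * (u / 2)" unfolding A_def u_def
      using A2 t sig by (intro mult_right_mono) auto
    have e: "A * (1 - u/4)^2 = A - A * (u/2) + A * (u/4)^2" by (simp add: power2_eq_square algebra_simps)
    have nn: "A * (u/4)^2 \<ge> 0" by (simp add: A_def)
    have "A - 2 * u \<le> A * (1 - u/4)^2" using m e nn by linarith
    thus ?thesis by (simp add: A_def u_def mult.assoc)
  qed
  hence "(cmod (aa (-s) \<beta> t))^2 \<le> ((1 - \<sigma> * t / 4) * cmod (aa s \<beta> t))^2"
    using d2 by (simp add: power_mult_distrib mult_ac)
  moreover have "0 \<le> (1 - \<sigma> * t / 4) * cmod (aa s \<beta> t)"
  proof -
    have "\<sigma> * t \<le> 1 * 1" using sig t by (intro mult_mono) auto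
    thus ?thesis by simp
  qed
  ultimately show ?thesis by (rule power2_le_imp_le)
qed
lemma step_real:
  fixes x t Y M L \<kappa> :: real
  assumes x: "0 < x" "x \<le> 1/2" and t: "0 \<le> t" "t * (1 - x^2) \<le> M * x^2"
    and k: "\<kappa> * x \<le> 1" "x \<le> \<kappa>/4" "L * x^2 \<le> \<kappa>/4" "2 * L \<le> \<kappa> * M"
    and pos: "0 \<le> L" "0 \<le> M" "0 \<le> \<kappa>"
    and Y: "Y \<le> (1 - \<kappa> * x) * t * (1 + L * x^3) + L * x^3"
  shows "Y \<le> M * x^2"
proof -
  define K1 where "K1 = 1 - \<kappa> * x + L * x^3"
  have x3: "x^3 \<ge> 0" using x by simp
  have K1: "K1 \<ge> 0" using k x3 pos by (simp add: K1_def)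
  have "(1 - \<kappa> * x) * t * (1 + L * x^3) = K1 * t - (\<kappa> * x) * (L * x^3) * t"
    by (simp add: K1_def algebra_simps)
  moreover have "(\<kappa> * x) * (L * x^3) * t \<ge> 0" using pos x t by simp
  ultimately have Yb: "Y \<le> K1 * t + L * x^3" using Y by linarith
  have x2: "1 - x^2 > 0"
  proof -
    have "x^2 \<le> (1/2)^2" using x by (intro power_mono) auto
    thus ?thesis by (simp add: power2_eq_square)
  qed
  have "(1 - x^2) * Y \<le> (1 - x^2) * (K1 * t + L * x^3)" using Yb x2 by (intro mult_left_mono) auto
  also have "\<dots> = K1 * (t * (1 - x^2)) + (1 - x^2) * L * x^3" by (simp add: algebra_simps)
  also have "\<dots> \<le> K1 * (M * x^2) + (1 - x^2) * L * x^3" using K1 t by (simp add: mult_left_mono)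
  also have "\<dots> \<le> (1 - x^2) * (M * x^2)"
  proof -
    have eq: "K1 * (M * x^2) + (1 - x^2) * L * x^3 - (1 - x^2) * (M * x^2)
        = x^3 * (L + M * x + M * (L * x^2) - \<kappa> * M) - L * x^5"
      by (simp add: K1_def algebra_simps eval_nat_numeral)
    have f1: "M * x \<le> M * (\<kappa>/4)" using pos k by (intro mult_left_mono) auto
    have f2: "M * (L * x^2) \<le> M * (\<kappa>/4)" using pos k by (intro mult_left_mono) auto
    have "L + M * x + M * (L * x^2) - \<kappa> * M \<le> 0" using f1 f2 k by (simp add: algebra_simps)
    hence "x^3 * (L + M * x + M * (L * x^2) - \<kappa> * M) \<le> 0" using x3 by (simp add: mult_nonneg_nonpos)
    moreover have "L * x^5 \<ge> 0" using pos x by simp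
    ultimately show ?thesis using eq by linarith
  qed
  finally show ?thesis using x2 by simp
qed
lemma gen_diff: "(h1::complex) \<noteq> 0 \<Longrightarrow> h2 \<noteq> 0 \<Longrightarrow> m \<noteq> 0 \<Longrightarrow>
  (A - B/h1)/m - (A - B/h2)/m = (B/m/h1)*((h1-h2)/h2)"
  by (simp add: field_simps)

lemma Tm_diff:
  assumes "h1 \<noteq> 0" "h2 \<noteq> 0" "m > 0"
  shows "Tm s \<beta> m h1 - Tm s \<beta> m h2 = ((of_nat m - 1 + of_real \<beta>) / of_nat m / h1) * ((h1 - h2) / h2)"
  unfolding Tm_def using assms by (intro gen_diff) auto

lemma x_small:
  fixes eps :: real and m :: nat
  assumes "eps > 0" "real m \<ge> 1 / eps^2"
  shows "1 / sqrt (real m) \<le> eps" "1 / sqrt (real m) > 0"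
proof -
  have "1 / eps^2 > 0" using assms by simp
  hence m0: "real m > 0" using assms by linarith
  have "sqrt (real m) \<ge> sqrt (1 / eps^2)" using assms by (simp add: real_sqrt_le_mono)
  also have "sqrt (1 / eps^2) = 1 / eps" using assms by (simp add: real_sqrt_divide)
  finally have "sqrt (real m) \<ge> 1 / eps" .
  thus "1 / sqrt (real m) \<le> eps" using assms m0 by (simp add: field_simps)
  show "1 / sqrt (real m) > 0" using m0 by simp
qed

definition epsc :: "real \<Rightarrow> real \<Rightarrow> real \<Rightarrow> real" where
  "epsc \<sigma> S \<beta> = min (1/2) (min (1 / (2 * (S + Ccb S \<beta>))) (min (\<sigma> / (2 * Ccb S \<beta>))
     (min (\<sigma> / (2 * Ccb S \<beta> * S)) (min (\<sigma> / 16) (min ((\<sigma>/4) / (4 * (2 * Kr S \<beta> / \<sigma>))) (1 / (8 * S)))))))"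
definition N1c :: "real \<Rightarrow> real \<Rightarrow> real \<Rightarrow> nat" where
  "N1c \<sigma> S \<beta> = nat \<lceil>1 / (epsc \<sigma> S \<beta>)^2\<rceil> + 4"
definition Mc :: "real \<Rightarrow> real \<Rightarrow> real \<Rightarrow> real" where
  "Mc \<sigma> S \<beta> = max (5 * real (N1c \<sigma> S \<beta>)) (2 * (2 * Kr S \<beta> / \<sigma>) / (\<sigma>/4))"
definition Nc :: "real \<Rightarrow> real \<Rightarrow> real \<Rightarrow> nat" where
  "Nc \<sigma> S \<beta> = N1c \<sigma> S \<beta> + nat \<lceil>2 * Mc \<sigma> S \<beta>\<rceil> + 1"
definition Cfin :: "real \<Rightarrow> real \<Rightarrow> real \<Rightarrow> real" where
  "Cfin \<sigma> S \<beta> = 32 * Mc \<sigma> S \<beta> * S + 2 * ((2 * Ccb S \<beta> + S^2) * S + Ccb S \<beta> * (Ccb S \<beta> + S^2))"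

lemma Ccb_pos: "\<beta> > 0 \<Longrightarrow> Ccb S \<beta> > 0" by (simp add: Ccb_def add_nonneg_pos)
lemma pos6: "0 \<le> (a1::real) \<Longrightarrow> 0 < a2 \<Longrightarrow> 0 \<le> a3 \<Longrightarrow> 0 \<le> a4 \<Longrightarrow> 0 \<le> a5 \<Longrightarrow> 0 \<le> a6 \<Longrightarrow>
  0 < 2 * (a1 + a2 + a3 + a4 + a5 + a6)" by simp

lemma gl4: "(L::real) > 0 \<Longrightarrow> x \<le> k / (4 * L) \<Longrightarrow> L * x \<le> k / 4"
  by (simp add: field_simps)

lemma gl2: "(L::real) > 0 \<Longrightarrow> x \<le> k / (2 * L) \<Longrightarrow> L * x \<le> k / 2"
  by (simp add: field_simps)

lemma Kr_pos: assumes "\<beta> > 0" "S \<ge> 0" shows "Kr S \<beta> > 0"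
proof -
  have C0: "Ccb S \<beta> > 0" and Q0: "Qb S \<beta> \<ge> 0" using Ccb_pos[of \<beta> S] Qb_nonneg[of \<beta> S] assms by auto
  have "S * (2 * Ccb S \<beta> + Qb S \<beta>) \<ge> 0" "S * Ccb S \<beta> \<ge> 0" "2 * Qb S \<beta> * Ccb S \<beta> \<ge> 0"
    "\<bar>1/2 - \<beta>\<bar> \<ge> 0"
    using C0 Q0 assms by simp_all
  thus ?thesis using C0 assms unfolding Kr_def by (intro pos6) auto
qed

lemma small_conds:
  assumes \<beta>: "\<beta> > 0" and sig: "0 < \<sigma>" "\<sigma> \<le> 1" and S: "S \<ge> 1"
    and x: "0 < x" "x \<le> epsc \<sigma> S \<beta>"
  shows "x \<le> 1/2" "(S + Ccb S \<beta>) * x \<le> 1/2" "Ccb S \<beta> * x \<le> \<sigma>/2"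
    "Ccb S \<beta> * S * x^2 \<le> \<sigma> / 2" "x \<le> (\<sigma>/4)/4" "(2 * Kr S \<beta> / \<sigma>) * x^2 \<le> (\<sigma>/4)/4"
    "x \<le> 1 / (8 * S)" "(\<sigma>/4) * x \<le> 1"
proof -
  have C0: "Ccb S \<beta> > 0" by (rule Ccb_pos[OF \<beta>])
  have K0: "Kr S \<beta> > 0" using Kr_pos[OF \<beta>] S by simp
  have L0: "2 * Kr S \<beta> / \<sigma> > 0" using K0 sig by simp
  obtain e1: "x \<le> 1/2" and e2: "x \<le> 1 / (2 * (S + Ccb S \<beta>))" and e3: "x \<le> \<sigma> / (2 * Ccb S \<beta>)"
    and e4: "x \<le> \<sigma> / (2 * Ccb S \<beta> * S)" and e5: "x \<le> \<sigma> / 16"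
    and e6: "x \<le> (\<sigma>/4) / (4 * (2 * Kr S \<beta> / \<sigma>))" and e7: "x \<le> 1 / (8 * S)"
    using x(2) unfolding epsc_def by (simp only: min.bounded_iff)
  show x12: "x \<le> 1/2" by (rule e1)
  have x1: "x \<le> 1" using x12 by simp
  have "(S + Ccb S \<beta>) * x \<le> 1/2" using gl2[OF _ e2] C0 S by simp
  thus "(S + Ccb S \<beta>) * x \<le> 1/2" .
  show "Ccb S \<beta> * x \<le> \<sigma>/2" using gl2[OF _ e3] C0 by simp
  have e4': "x \<le> \<sigma> / (2 * (Ccb S \<beta> * S))" using e4 by (simp only: mult.assoc)
  have "Ccb S \<beta> * S * x \<le> \<sigma> / 2" using gl2[OF _ e4'] C0 S by simp
  moreover have "Ccb S \<beta> * S * x^2 \<le> Ccb S \<beta> * S * x"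
    using C0 S x x1 by (intro mult_left_mono) (auto simp: power2_eq_square mult_left_le)
  ultimately show "Ccb S \<beta> * S * x^2 \<le> \<sigma> / 2" by linarith
  show "x \<le> (\<sigma>/4)/4" using e5 by simp
  note e6
  hence "(2 * Kr S \<beta> / \<sigma>) * x \<le> (\<sigma>/4)/4" using gl4[OF L0] by blast
  moreover have "(2 * Kr S \<beta> / \<sigma>) * x^2 \<le> (2 * Kr S \<beta> / \<sigma>) * x"
    using L0 x x1 by (intro mult_left_mono) (auto simp: power2_eq_square mult_left_le)
  ultimately show "(2 * Kr S \<beta> / \<sigma>) * x^2 \<le> (\<sigma>/4)/4" by linarith
  show "x \<le> 1 / (8 * S)" by (rule e7)
  have "(\<sigma>/4) * x \<le> 1 * 1" using sig x x1 by (intro mult_mono) auto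
  thus "(\<sigma>/4) * x \<le> 1" by simp
qed

lemma epsc_pos: "\<beta> > 0 \<Longrightarrow> \<sigma> > 0 \<Longrightarrow> S \<ge> 1 \<Longrightarrow> epsc \<sigma> S \<beta> > 0"
proof -
  assume a: "\<beta> > 0" "\<sigma> > 0" "S \<ge> 1"
  have C0: "Ccb S \<beta> > 0" using Ccb_pos a by auto
  have K0: "Kr S \<beta> > 0" using Kr_pos[of \<beta> S] a by auto
  have "1 / (2 * (S + Ccb S \<beta>)) > 0" "\<sigma> / (2 * Ccb S \<beta>) > 0" "\<sigma> / (2 * Ccb S \<beta> * S) > 0"
    "\<sigma>/16 > 0" "(\<sigma>/4) / (4 * (2 * Kr S \<beta> / \<sigma>)) > 0" "1 / (8 * S) > 0" "(1/2::real) > 0"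
    using a C0 K0 by simp_all
  thus ?thesis unfolding epsc_def by (simp only: min_less_iff_conj)
qed
lemma final_identity:
  fixes h a s c c' X :: complex
  assumes "h \<noteq> 0" "a \<noteq> 0" "a = 1 + s * X + c * X^2" "c' = c - s^2"
  shows "1 - 1 / h - s * X - c' * X^2 = (h - a) / (a * h) + (- (c + c') * s * X^3 - c * c' * X^4) / a"
proof -
  have P: "(a - 1) - (s * X + c' * X^2) * a = - (c + c') * s * X^3 - c * c' * X^4"
    unfolding assms(3,4) by (simp add: algebra_simps eval_nat_numeral)
  have G: "1 - 1 / h - T = (h - a) / (a * h) + R / a" if e: "(a - 1) - T * a = R" for T R
    by (subst e[symmetric]) (use assms(1,2) in \<open>simp add: field_simps\<close>)
  have "1 - 1 / h - (s * X + c' * X^2) = (h - a) / (a * h) + (- (c + c') * s * X^3 - c * c' * X^4) / a"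
    by (rule G[OF P])
  thus ?thesis by (simp add: algebra_simps)
qed

lemma Tm_neg [simp]: "Tm (-s) \<beta> m h = Tm s \<beta> m h" by (simp add: Tm_def)

lemma est_fixed:
  fixes s :: complex and h :: "nat \<Rightarrow> complex" and \<beta> \<sigma> S :: real
  assumes \<beta>: "\<beta> > 0" and sig: "0 < \<sigma>" "\<sigma> \<le> 1" and S1: "S \<ge> 1"
    and sRe: "\<sigma> \<le> Re s" and sS: "cmod s \<le> S"
    and inv: "\<forall>m\<ge>1. Re (cnj s * (h m - 1)) > 0"
    and rec: "\<forall>m\<ge>2. h m = Tm s \<beta> m (h (m-1))"
  shows "\<forall>n \<ge> Nc \<sigma> S \<beta>. cmod (1 - 1 / h n - s * of_real (1 / sqrt (real n))
            - (of_real (\<beta>/2 - 1/4) - s^2/2) * of_real (1 / real n)) \<le> Cfin \<sigma> S \<beta> * (1 / sqrt (real n))^3"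
proof -
  define eps where "eps = epsc \<sigma> S \<beta>"
  define N1 where "N1 = N1c \<sigma> S \<beta>"
  define M where "M = Mc \<sigma> S \<beta>"
  define L where "L = 2 * Kr S \<beta> / \<sigma>"
  define \<kappa> where "\<kappa> = \<sigma> / 4"
  define x where "x m = 1 / sqrt (real m)" for m
  define a where "a m = aa s \<beta> (x m)" for m
  define b where "b m = aa (-s) \<beta> (x m)" for m
  define yq where "yq m = (h m - a m) / (h m - b m)" for m
  have epos: "eps > 0" unfolding eps_def using epsc_pos \<beta> sig S1 by auto
  have S0: "S \<ge> 0" using S1 by simp
  have sR: "Re s \<le> cmod s" by (rule complex_Re_le_cmod)
  have ssig: "cmod s \<ge> \<sigma>" using sR sRe by linarith
  have mS: "cmod (-s) \<le> S" using sS by simp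
  have Kr0: "Kr S \<beta> > 0" using Kr_pos \<beta> S0 by auto
  have L0: "L > 0" using Kr0 sig by (simp add: L_def)
  have N1ge: "N1 \<ge> 4" by (simp add: N1_def N1c_def)
  have xpos: "x m > 0" if "m \<ge> 1" for m using that by (simp add: x_def)
  have xeps: "x m \<le> eps" if "m \<ge> N1" for m
  proof -
    have "real m \<ge> 1 / eps^2"
    proof -
      have "1 / eps^2 \<le> real (nat \<lceil>1 / eps^2\<rceil>)" by linarith
      also have "\<dots> \<le> real m" using that by (simp add: N1_def N1c_def eps_def)
      finally show ?thesis .
    qed
    thus ?thesis unfolding x_def using x_small(1)[OF epos] by blast
  qed
  have sc: "x m \<le> 1/2 \<and> (S + Ccb S \<beta>) * x m \<le> 1/2 \<and> Ccb S \<beta> * x m \<le> \<sigma>/2 \<and>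
      Ccb S \<beta> * S * (x m)^2 \<le> \<sigma> / 2 \<and> x m \<le> \<kappa>/4 \<and> L * (x m)^2 \<le> \<kappa>/4 \<and>
      x m \<le> 1 / (8 * S) \<and> \<kappa> * x m \<le> 1" if "m \<ge> N1" for m
  proof -
    have "x m > 0" using xpos that N1ge by simp
    thus ?thesis using small_conds[OF \<beta> sig S1 _ xeps[OF that, unfolded eps_def]] by (simp add: L_def \<kappa>_def)
  qed
  have hnz: "h m \<noteq> 0" if "m \<ge> 1" for m
  proof
    assume "h m = 0"
    thus False using inv that sig sRe by auto
  qed
  have vlow: "cmod (h m - b m) \<ge> cmod s * x m / 2" if "m \<ge> N1" for m
    unfolding b_def using dist_b[of s "h m" \<sigma> S \<beta> "x m"] inv that N1ge sig sRe sS \<beta> xpos sc[OF that] by auto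
  have vlow': "cmod (h m - b m) \<ge> \<sigma> * x m / 2" if "m \<ge> N1" for m
  proof -
    have "\<sigma> * x m \<le> cmod s * x m" using ssig xpos[of m] that N1ge by (intro mult_right_mono) auto
    thus ?thesis using vlow[OF that] by linarith
  qed
  have abnd: "1/2 \<le> cmod (a m) \<and> cmod (a m) \<le> 3/2 \<and> 1/2 \<le> cmod (b m) \<and> cmod (b m) \<le> 3/2" if "m \<ge> N1" for m
  proof -
    have x01: "0 \<le> x m" "x m \<le> 1" using xpos[of m] sc[OF that] that N1ge by auto
    show ?thesis unfolding a_def b_def
      using a_bounds[OF x01 sS \<beta>] a_bounds[OF x01 mS \<beta>] sc[OF that] by simp
  qed
  have ratio: "cmod (b m) \<le> (1 - \<kappa> * x m) * cmod (a m)" if "m \<ge> N1" for m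
  proof -
    have x01: "0 < x m" "x m \<le> 1" using xpos[of m] sc[OF that] that N1ge by auto
    show ?thesis unfolding a_def b_def \<kappa>_def
      using ratio_ab[OF x01 sS \<beta> _ _ sRe sig] sc[OF that] by (simp add: mult_ac)
  qed
  have res: "cmod (Tm s \<beta> m (a (m-1)) - a m) \<le> Kr S \<beta> * (x m)^4 \<and>
             cmod (Tm s \<beta> m (b (m-1)) - b m) \<le> Kr S \<beta> * (x m)^4" if "m \<ge> N1 + 1" for m
  proof -
    have m2: "m \<ge> 2" using that N1ge by simp
    have xm1: "x (m-1) = 1 / sqrt (real m - 1)" using m2 by (simp add: x_def of_nat_diff)
    have "m - 1 \<ge> N1" using that by simp
    note ab1 = abnd[OF this]
    have xh: "x m \<le> 1/2" using sc[of m] that by simp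
    have r1: "cmod (Tm s \<beta> m (aa s \<beta> (x (m-1))) - aa s \<beta> (x m)) \<le> Kr S \<beta> * (x m)^4"
      using residual[OF m2 sS \<beta> _ xm1 xh] ab1 by (simp add: a_def x_def)
    have r2: "cmod (Tm (-s) \<beta> m (aa (-s) \<beta> (x (m-1))) - aa (-s) \<beta> (x m)) \<le> Kr S \<beta> * (x m)^4"
      using residual[OF m2 mS \<beta> _ xm1 xh] ab1 by (simp add: b_def x_def)
    show ?thesis using r1 r2 by (simp add: a_def b_def)
  qed
  have Mge: "M \<ge> 5 * real N1" "\<kappa> * M \<ge> 2 * L"
  proof -
    show "M \<ge> 5 * real N1" by (simp add: M_def Mc_def N1_def)
    have "M \<ge> 2 * L / \<kappa>" by (simp add: M_def Mc_def L_def \<kappa>_def)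
    thus "\<kappa> * M \<ge> 2 * L" using sig by (simp add: \<kappa>_def field_simps)
  qed
  have M0: "M \<ge> 0" using Mge(1) by simp
  have k0: "\<kappa> > 0" using sig by (simp add: \<kappa>_def)
  have x2: "(x m)^2 = 1 / real m" if "m \<ge> 1" for m using that by (simp add: x_def power_divide)
  have amb: "a m - b m = 2 * s * of_real (x m)" for m by (simp add: a_def b_def aa_def)
  have base0: "cmod (yq N1) \<le> M * (x N1)^2"
  proof -
    have N: "N1 \<ge> N1" by simp
    have xp: "x N1 > 0" using xpos N1ge by simp
    have vp: "cmod (h N1 - b N1) \<ge> cmod s * x N1 / 2" by (rule vlow[OF N])
    have sp: "cmod s > 0" using ssig sig by linarith
    have vpos: "cmod (h N1 - b N1) > 0" using vp sp xp by (smt (verit) divide_pos_pos mult_pos_pos)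
    have "h N1 - a N1 = (h N1 - b N1) - (a N1 - b N1)" by simp
    hence "cmod (h N1 - a N1) \<le> cmod (h N1 - b N1) + cmod (a N1 - b N1)" by (metis norm_triangle_ineq4)
    also have "cmod (a N1 - b N1) = 2 * cmod s * x N1" unfolding amb using xp by (simp add: norm_mult)
    finally have u: "cmod (h N1 - a N1) \<le> cmod (h N1 - b N1) + 2 * cmod s * x N1" .
    have "2 * cmod s * x N1 \<le> 4 * cmod (h N1 - b N1)" using vp by linarith
    hence "cmod (h N1 - a N1) \<le> 5 * cmod (h N1 - b N1)" using u by linarith
    hence "cmod (yq N1) \<le> 5" unfolding yq_def using vpos by (simp add: norm_divide divide_le_eq)
    also have "5 = 5 * real N1 * (x N1)^2" using x2[of N1] N1ge by simp
    also have "\<dots> \<le> M * (x N1)^2" using Mge by (intro mult_right_mono) auto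
    finally show ?thesis .
  qed
  have step: "cmod (yq (Suc n)) \<le> M * (x (Suc n))^2" if n: "n \<ge> N1" and IH: "cmod (yq n) \<le> M * (x n)^2" for n
  proof -
    define m where "m = Suc n"
    have mN: "m \<ge> N1 + 1" "m \<ge> N1" "m \<ge> 2" "n \<ge> 1" using n N1ge by (auto simp: m_def)
    define u where "u = h m - a m"
    define v where "v = h m - b m"
    define u' where "u' = h n - a n"
    define v' where "v' = h n - b n"
    define \<rho> where "\<rho> = Tm s \<beta> m (a n) - a m"
    define \<sigma>r where "\<sigma>r = Tm s \<beta> m (b n) - b m"
    define t where "t = cmod (yq n)"
    define k where "k = cmod (b n) / cmod (a n)"
    have nm: "m - 1 = n" by (simp add: m_def)
    have xm: "0 < x m" "x m \<le> x n" using mN xpos by (auto simp: x_def m_def frac_le)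
    have hm: "h m = Tm s \<beta> m (h n)" using rec mN nm by auto
    have hn0: "h n \<noteq> 0" using hnz mN by simp
    have an0: "a n \<noteq> 0" and bn0: "b n \<noteq> 0" and an: "cmod (a n) \<ge> 1/2" using abnd[OF n] by auto
    have v'0: "v' \<noteq> 0"
    proof -
      have "cmod v' \<ge> \<sigma> * x n / 2" unfolding v'_def by (rule vlow'[OF n])
      moreover have "\<sigma> * x n / 2 > 0" using sig xpos mN by simp
      ultimately show ?thesis by auto
    qed
    have vb: "cmod v \<ge> \<sigma> * x m / 2" unfolding v_def by (rule vlow'[OF mN(2)])
    have vpos: "cmod v > 0" using vb sig xm by (smt (verit) divide_pos_pos mult_pos_pos)
    have rr: "cmod \<rho> \<le> Kr S \<beta> * (x m)^4" "cmod \<sigma>r \<le> Kr S \<beta> * (x m)^4"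
      using res[OF mN(1)] nm by (simp_all add: \<rho>_def \<sigma>r_def)
    define D where "D = (of_nat m - 1 + of_real \<beta>) / of_nat m / h n"
    have m0: "m > 0" using mN by simp
    have d1: "Tm s \<beta> m (h n) - Tm s \<beta> m (a n) = D * (u' / a n)"
      unfolding D_def u'_def by (rule Tm_diff[OF hn0 an0 m0])
    have d2: "Tm s \<beta> m (h n) - Tm s \<beta> m (b n) = D * (v' / b n)"
      unfolding D_def v'_def by (rule Tm_diff[OF hn0 bn0 m0])
    have ueq: "u = D * (u' / a n) + \<rho>" unfolding u_def \<rho>_def hm using d1 by (simp add: algebra_simps)
    have veq: "v - \<sigma>r = D * (v' / b n)" unfolding v_def \<sigma>r_def hm using d2 by (simp add: algebra_simps)
    have ueq2: "u = (b n / a n) * yq n * (v - \<sigma>r) + \<rho>"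
    proof -
      have e: "(b n / a n) * yq n * (v - \<sigma>r) = D * (u' / a n)"
        unfolding veq yq_def using bn0 v'0 an0 by (simp add: u'_def v'_def field_simps)
      show ?thesis by (simp only: e ueq)
    qed
    have U: "cmod u \<le> k * t * (cmod v + cmod \<sigma>r) + cmod \<rho>"
    proof -
      have "cmod u \<le> cmod ((b n / a n) * yq n * (v - \<sigma>r)) + cmod \<rho>" unfolding ueq2 by (rule norm_triangle_ineq)
      also have "cmod ((b n / a n) * yq n * (v - \<sigma>r)) = k * t * cmod (v - \<sigma>r)"
        by (simp add: k_def t_def norm_mult norm_divide)
      also have "\<dots> \<le> k * t * (cmod v + cmod \<sigma>r)"
        by (intro mult_left_mono norm_triangle_ineq4) (auto simp: k_def t_def)
      finally show ?thesis by simp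
    qed
    have Lq: "cmod \<sigma>r / cmod v \<le> L * (x m)^3" "cmod \<rho> / cmod v \<le> L * (x m)^3"
    proof -
      have "Kr S \<beta> * (x m)^4 / (\<sigma> * x m / 2) = L * (x m)^3"
        using xm sig by (simp add: L_def field_simps eval_nat_numeral)
      moreover have "cmod \<sigma>r / cmod v \<le> Kr S \<beta> * (x m)^4 / (\<sigma> * x m / 2)"
        using rr vb sig xm Kr0 by (intro frac_le) auto
      moreover have "cmod \<rho> / cmod v \<le> Kr S \<beta> * (x m)^4 / (\<sigma> * x m / 2)"
        using rr vb sig xm Kr0 by (intro frac_le) auto
      ultimately show "cmod \<sigma>r / cmod v \<le> L * (x m)^3" "cmod \<rho> / cmod v \<le> L * (x m)^3" by auto
    qed
    have kb: "k \<le> 1 - \<kappa> * x m"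
    proof -
      have "k \<le> 1 - \<kappa> * x n" using ratio[OF n] an an0 by (simp add: k_def divide_le_eq)
      also have "\<dots> \<le> 1 - \<kappa> * x m" using xm k0 by (simp add: mult_left_mono)
      finally show ?thesis .
    qed
    have k0': "k \<ge> 0" "t \<ge> 0" by (simp_all add: k_def t_def)
    have Y: "cmod (yq m) \<le> (1 - \<kappa> * x m) * t * (1 + L * (x m)^3) + L * (x m)^3"
    proof -
      have "cmod (yq m) = cmod u / cmod v" by (simp add: yq_def u_def v_def norm_divide)
      also have "\<dots> \<le> (k * t * (cmod v + cmod \<sigma>r) + cmod \<rho>) / cmod v"
        using U vpos by (simp add: divide_right_mono)
      also have "\<dots> = k * t * (1 + cmod \<sigma>r / cmod v) + cmod \<rho> / cmod v"
        using vpos by (simp add: field_simps)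
      also have "\<dots> \<le> k * t * (1 + L * (x m)^3) + L * (x m)^3"
        using Lq k0' by (intro add_mono mult_left_mono) auto
      also have "\<dots> \<le> (1 - \<kappa> * x m) * t * (1 + L * (x m)^3) + L * (x m)^3"
      proof -
        have "(x m)^3 \<ge> 0" using xm by simp
        hence "1 + L * (x m)^3 \<ge> 0" using L0 by simp
        thus ?thesis using kb k0' xm by (intro add_mono mult_right_mono) auto
      qed
      finally show ?thesis .
    qed
    have tb: "t * (1 - (x m)^2) \<le> M * (x m)^2"
    proof -
      have A: "(x n)^2 = 1 / real n" using x2[of n] mN by simp
      have B: "(x m)^2 = 1 / (real n + 1)" using x2[of m] mN by (simp add: m_def)
      have "1 / real n * (1 - 1 / (real n + 1)) = 1 / (real n + 1)" using mN by (simp add: field_simps)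
      hence eqx: "(x n)^2 * (1 - (x m)^2) = (x m)^2" unfolding A B .
      have "(x m)^2 \<le> 1" using B mN by simp
      hence "t * (1 - (x m)^2) \<le> (M * (x n)^2) * (1 - (x m)^2)" using IH by (intro mult_right_mono) (auto simp: t_def)
      also have "\<dots> = M * (x m)^2" by (simp only: mult.assoc eqx)
      finally show ?thesis .
    qed
    have scm: "x m \<le> 1/2" "\<kappa> * x m \<le> 1" "x m \<le> \<kappa>/4" "L * (x m)^2 \<le> \<kappa>/4" using sc[OF mN(2)] by auto
    show ?thesis using step_real[OF xm(1) scm(1) k0'(2) tb scm(2,3,4) Mge(2) _ M0 _ Y] L0 k0
      by (simp add: m_def)
  qed
  have ind: "cmod (yq m) \<le> M * (x m)^2" if "m \<ge> N1" for m
    using that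
  proof (induction m rule: nat_induct_at_least)
    case base thus ?case by (rule base0)
  next
    case (Suc n) thus ?case using step by blast
  qed
  show ?thesis
  proof (intro allI impI)
    fix n assume nN: "n \<ge> Nc \<sigma> S \<beta>"
    have n1: "n \<ge> N1" using nN by (simp add: Nc_def N1_def)
    have n2M: "real n \<ge> 2 * M"
    proof -
      have "2 * M \<le> real (nat \<lceil>2 * M\<rceil>)" by linarith
      also have "\<dots> \<le> real n"
      proof -
        have "nat \<lceil>2 * M\<rceil> \<le> n" using nN unfolding Nc_def M_def by linarith
        thus ?thesis by (rule of_nat_mono)
      qed
      finally show ?thesis .
    qed
    have npos: "real n > 0" using n1 N1ge by simp
    define X where "X = x n"
    have X0: "X > 0" using xpos n1 N1ge by (simp add: X_def)
    have X2: "X^2 = 1 / real n" using x2[of n] n1 N1ge by (simp add: X_def)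
    have scn: "X \<le> 1/2" "X \<le> 1 / (8 * S)" using sc[OF n1] by (auto simp: X_def)
    have yb: "cmod (yq n) \<le> M * X^2" using ind[OF n1] by (simp add: X_def)
    have MX: "M * X^2 \<le> 1/2" unfolding X2 using n2M npos by (simp add: field_simps)
    define u where "u = h n - a n"
    define v where "v = h n - b n"
    have vb: "cmod v \<ge> \<sigma> * X / 2" unfolding v_def X_def by (rule vlow'[OF n1])
    have "\<sigma> * X > 0" using sig X0 by simp
    hence v0: "v \<noteq> 0" using vb by auto
    have uyv: "u = yq n * v" using v0 by (simp add: yq_def u_def v_def)
    have "v = u + (a n - b n)" by (simp add: u_def v_def)
    hence "cmod v \<le> cmod u + 2 * cmod s * X" using X0 norm_triangle_ineq[of u "a n - b n"]
      by (simp add: amb norm_mult X_def)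
    hence "cmod u \<le> cmod (yq n) * (cmod u + 2 * cmod s * X)"
      unfolding uyv norm_mult by (intro mult_left_mono) auto
    hence "cmod u * (1 - cmod (yq n)) \<le> 2 * cmod s * X * cmod (yq n)" by (simp add: algebra_simps)
    moreover have "1 - cmod (yq n) \<ge> 1/2" using yb MX by linarith
    ultimately have "cmod u * (1/2) \<le> 2 * cmod s * X * cmod (yq n)"
      by (smt (verit) mult_left_mono norm_ge_zero)
    hence "cmod u \<le> 4 * cmod s * X * cmod (yq n)" by simp
    also have "\<dots> \<le> 4 * S * X * (M * X^2)" using sS X0 yb S0 by (intro mult_mono) auto
    finally have ub: "cmod u \<le> 4 * S * M * X^3" by (simp add: power3_eq_cube power2_eq_square mult_ac)
    have anb: "cmod (a n) \<ge> 1/2" using abnd[OF n1] by simp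
    have small: "4 * S * M * X^3 \<le> 1/4"
    proof -
      have "4 * S * M * X^3 = 4 * S * X * (M * X^2)" by (simp add: power3_eq_cube power2_eq_square mult_ac)
      also have "\<dots> \<le> 4 * S * X * (1/2)" using MX S0 X0 by (intro mult_left_mono) auto
      also have "\<dots> \<le> 1/4" using scn S1 by (simp add: field_simps)
      finally show ?thesis .
    qed
    have hb: "cmod (h n) \<ge> 1/4"
    proof -
      have "h n = a n + u" by (simp add: u_def)
      hence "cmod (a n) \<le> cmod (h n) + cmod u" using norm_triangle_ineq4[of "h n" u] by simp
      thus ?thesis using anb ub small by linarith
    qed
    have h0: "h n \<noteq> 0" using hb by auto
    have a0: "a n \<noteq> 0" using anb by auto
    define c where "c = cc s \<beta>"
    define c' where "c' = of_real (\<beta>/2 - 1/4) - s^2/2"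
    have cc': "c' = c - s^2" by (simp add: c_def c'_def cc_def field_simps)
    have aeq: "a n = 1 + s * of_real X + c * (of_real X)^2" by (simp add: a_def aa_def c_def X_def)
    have fid: "1 - 1 / h n - s * of_real X - c' * (of_real X)^2
        = u / (a n * h n) + (- (c + c') * s * (of_real X)^3 - c * c' * (of_real X)^4) / a n"
      unfolding u_def by (rule final_identity[OF h0 a0 aeq cc'])
    have cb: "cmod c \<le> Ccb S \<beta>" unfolding c_def by (rule cc_bound[OF sS \<beta>])
    have Cc0: "Ccb S \<beta> \<ge> 0" using Ccb_nonneg \<beta> by auto
    have c'b: "cmod c' \<le> Ccb S \<beta> + S^2"
    proof -
      have "cmod c' \<le> cmod c + cmod (s^2)" unfolding cc' by (rule norm_triangle_ineq4)
      also have "cmod (s^2) \<le> S^2" using sS by (simp add: norm_power power_mono)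
      finally show ?thesis using cb by linarith
    qed
    have ccb: "cmod (c + c') \<le> 2 * Ccb S \<beta> + S^2" using norm_triangle_ineq[of c c'] cb c'b by linarith
    have t1: "cmod (u / (a n * h n)) \<le> 32 * M * S * X^3"
    proof -
      have "cmod (u / (a n * h n)) = cmod u / (cmod (a n) * cmod (h n))" by (simp add: norm_divide norm_mult)
      also have "\<dots> \<le> (4 * S * M * X^3) / ((1/2) * (1/4))"
        using ub anb hb M0 S0 X0 by (intro frac_le mult_mono) auto
      finally show ?thesis by (simp add: mult_ac)
    qed
    have X1: "X \<le> 1" using scn by simp
    have t2: "cmod ((- (c + c') * s * (of_real X)^3 - c * c' * (of_real X)^4) / a n)
        \<le> 2 * ((2 * Ccb S \<beta> + S^2) * S + Ccb S \<beta> * (Ccb S \<beta> + S^2)) * X^3"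
    proof -
      have "cmod (- (c + c') * s * (of_real X)^3 - c * c' * (of_real X)^4)
          \<le> cmod (c + c') * cmod s * X^3 + cmod c * cmod c' * X^4"
      proof -
        have "- c - c' = - (c + c')" by simp
        hence nm: "cmod (- c - c') = cmod (c + c')" by (simp only: norm_minus_cancel)
        show ?thesis
          using norm_triangle_ineq4[of "- (c + c') * s * (of_real X)^3" "c * c' * (of_real X)^4"] X0
          by (simp add: norm_mult norm_power nm)
      qed
      also have "\<dots> \<le> (2 * Ccb S \<beta> + S^2) * S * X^3 + Ccb S \<beta> * (Ccb S \<beta> + S^2) * X^3"
      proof -
        have X3: "X^3 \<ge> 0" using X0 by simp
        have X43: "X^4 \<le> X^3" using X0 X1 by (simp add: power_decreasing)
        have m1: "cmod (c + c') * cmod s \<le> (2 * Ccb S \<beta> + S^2) * S"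
          using ccb sS Cc0 by (intro mult_mono) auto
        have m2: "cmod c * cmod c' \<le> Ccb S \<beta> * (Ccb S \<beta> + S^2)"
          using cb c'b Cc0 by (intro mult_mono) auto
        have b1: "cmod (c + c') * cmod s * X^3 \<le> (2 * Ccb S \<beta> + S^2) * S * X^3"
          using m1 X3 by (rule mult_right_mono)
        have b2: "cmod c * cmod c' * X^4 \<le> Ccb S \<beta> * (Ccb S \<beta> + S^2) * X^3"
        proof -
          have "cmod c * cmod c' * X^4 \<le> Ccb S \<beta> * (Ccb S \<beta> + S^2) * X^4"
            using m2 X0 by (intro mult_right_mono) auto
          also have "\<dots> \<le> Ccb S \<beta> * (Ccb S \<beta> + S^2) * X^3"
            using X43 Cc0 S0 by (intro mult_left_mono) auto
          finally show ?thesis .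
        qed
        show ?thesis using b1 b2 by (rule add_mono)
      qed
      finally have nb: "cmod (- (c + c') * s * (of_real X)^3 - c * c' * (of_real X)^4)
          \<le> ((2 * Ccb S \<beta> + S^2) * S + Ccb S \<beta> * (Ccb S \<beta> + S^2)) * X^3" by (simp only: distrib_right)
      have "cmod ((- (c + c') * s * (of_real X)^3 - c * c' * (of_real X)^4) / a n)
          = cmod (- (c + c') * s * (of_real X)^3 - c * c' * (of_real X)^4) / cmod (a n)" by (simp add: norm_divide)
      also have "\<dots> \<le> (((2 * Ccb S \<beta> + S^2) * S + Ccb S \<beta> * (Ccb S \<beta> + S^2)) * X^3) / (1/2)"
        using nb anb X0 Cc0 S0 by (intro frac_le) auto
      finally show ?thesis by (simp add: algebra_simps)
    qed
    have "cmod (1 - 1 / h n - s * of_real X - c' * (of_real X)^2) \<le> 32 * M * S * X^3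
        + 2 * ((2 * Ccb S \<beta> + S^2) * S + Ccb S \<beta> * (Ccb S \<beta> + S^2)) * X^3"
      unfolding fid using t1 t2 norm_triangle_ineq[of "u / (a n * h n)" "(- (c + c') * s * (of_real X)^3 - c * c' * (of_real X)^4) / a n"]
      by linarith
    also have "\<dots> = Cfin \<sigma> S \<beta> * X^3" by (simp add: Cfin_def M_def algebra_simps)
    finally have fin: "cmod (1 - 1 / h n - s * of_real X - c' * (of_real X)^2) \<le> Cfin \<sigma> S \<beta> * X^3" .
    have X2c: "(of_real X :: complex)^2 = of_real (1 / real n)" using X2 by (metis of_real_power)
    show "cmod (1 - 1 / h n - s * of_real (1 / sqrt (real n))
            - (of_real (\<beta>/2 - 1/4) - s^2/2) * of_real (1 / real n)) \<le> Cfin \<sigma> S \<beta> * (1 / sqrt (real n))^3"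
      using fin unfolding X2c[symmetric] c'_def X_def x_def .
  qed
qed

lemma csqrt_Re_pos:
  assumes "w \<notin> \<real>\<^sub>\<le>\<^sub>0" shows "Re (csqrt w) > 0"
proof (rule ccontr)
  assume "\<not> Re (csqrt w) > 0"
  hence r0: "Re (csqrt w) = 0" using Re_csqrt[of w] by linarith
  have "w = (csqrt w)^2" by simp
  also have "\<dots> = complex_of_real (- ((Im (csqrt w))^2))" using r0
    by (simp add: complex_eq_iff power2_eq_square)
  finally have "Re w \<le> 0 \<and> Im w = 0" by (metis Im_complex_of_real Re_complex_of_real neg_le_0_iff_le zero_le_power2)
  thus False using assms by (simp add: complex_nonpos_Reals_iff)
qed

lemma powr_conv: "n > 0 \<Longrightarrow> (1 / sqrt (real n))^3 = real n powr (-3/2)"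
proof -
  assume "n > 0"
  hence np: "real n > 0" by simp
  have "sqrt (real n) = real n powr (1/2)" using np by (simp add: powr_half_sqrt)
  hence "(1 / sqrt (real n))^3 = 1 / (real n powr (1/2))^3" by (simp add: power_divide)
  also have "(real n powr (1/2))^3 = real n powr (3/2)" using np by (simp add: powr_realpow[symmetric] powr_powr)
  also have "1 / real n powr (3/2) = real n powr (-3/2)" using np by (simp add: powr_minus_divide)
  finally show ?thesis .
qed

lemma csqrt_div:
  assumes "Re s > 0" "s^2 = w" "n > 0"
  shows "csqrt (w / of_nat n) = s * of_real (1 / sqrt (real n))"
proof (rule csqrt_unique)
  show "(s * of_real (1 / sqrt (real n)))^2 = w / of_nat n"
    using assms by (simp add: power_mult_distrib power_divide flip: of_real_power)
  show "0 < Re (s * of_real (1 / sqrt (real n))) \<or> Re (s * of_real (1 / sqrt (real n))) = 0 \<and> 0 \<le> Im (s * of_real (1 / sqrt (real n)))"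
    using assms by simp
qed

theorem mainTheorem6:
  fixes \<alpha> :: real and K :: "complex set"
  assumes "\<alpha> > -1"
    and "compact K"
    and "K \<subseteq> - {z. Im z = 0 \<and> Re z \<ge> 0}"
  shows "\<exists>C N. \<forall>n\<ge>N. \<forall>z\<in>K.
           cmod (laguerre n \<alpha> z / laguerre n (\<alpha> + 1) z
                 - csqrt (- z / of_nat n)
                 - (complex_of_real (\<alpha> / 2 + 1 / 4) + z / 2) / of_nat n)
           \<le> C * real n powr (- 3 / 2)"
proof (cases "K = {}")
  case True thus ?thesis by auto
next
  case False
  note Kc = assms(2)
  define \<beta> where "\<beta> = \<alpha> + 1"
  have \<beta>: "\<beta> > 0" using assms(1) by (simp add: \<beta>_def)
  have notR: "- z \<notin> \<real>\<^sub>\<le>\<^sub>0" if "z \<in> K" for z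
    using assms(3) that by (auto simp: complex_nonpos_Reals_iff)
  have cont: "continuous_on K (\<lambda>z. Re (csqrt (- z)))"
  proof -
    have "continuous_on K (\<lambda>z. csqrt (- z))"
      by (rule continuous_on_compose2[OF continuous_on_csqrt]) (use notR in \<open>auto intro!: continuous_intros\<close>)
    thus ?thesis by (intro continuous_intros)
  qed
  obtain z0 where z0: "z0 \<in> K" "\<forall>z\<in>K. Re (csqrt (- z0)) \<le> Re (csqrt (- z))"
    using continuous_attains_inf[OF Kc False cont] by blast
  define \<sigma> where "\<sigma> = min (Re (csqrt (- z0))) 1"
  have sig: "0 < \<sigma>" "\<sigma> \<le> 1" using csqrt_Re_pos[OF notR[OF z0(1)]] by (auto simp: \<sigma>_def)
  obtain B where B: "\<forall>z\<in>K. norm z \<le> B" using compact_imp_bounded[OF Kc] by (auto simp: bounded_iff)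
  define S where "S = max 1 (sqrt B)"
  have S1: "S \<ge> 1" by (simp add: S_def)
  show ?thesis
  proof (intro exI[of _ "Cfin \<sigma> S \<beta>"] exI[of _ "max (Nc \<sigma> S \<beta>) 1"] allI impI ballI)
    fix n z assume nN: "n \<ge> max (Nc \<sigma> S \<beta>) 1" and zK: "z \<in> K"
    define s where "s = csqrt (- z)"
    have sRe: "\<sigma> \<le> Re s"
    proof -
      have "Re (csqrt (- z0)) \<le> Re (csqrt (- z))" using z0(2) zK by blast
      thus ?thesis using min.cobounded1[of "Re (csqrt (- z0))" 1] unfolding s_def \<sigma>_def by linarith
    qed
    have sS: "cmod s \<le> S"
    proof -
      have "cmod s = sqrt (cmod z)" by (simp add: s_def)
      also have "\<dots> \<le> sqrt B" using B zK by simp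
      finally show ?thesis by (simp add: S_def)
    qed
    have s2: "s^2 = - z" by (simp add: s_def)
    have sRe0: "Re s > 0" using sRe sig by linarith
    define b where "b = complex_of_real \<beta>"
    define p where "p m = PL b m z" for m
    define h where "h m = p m / p (m - 1)" for m
    have invl: "p k \<noteq> 0 \<and> p (Suc k) \<noteq> 0 \<and> Re (cnj s * (p (Suc k) / p k - 1)) > 0" for k
      unfolding p_def b_def by (rule invariant[OF sRe0 s2 \<beta>])
    have inv: "\<forall>m\<ge>1. Re (cnj s * (h m - 1)) > 0"
    proof (intro allI impI)
      fix m :: nat assume "m \<ge> 1"
      then obtain k where "m = Suc k" by (cases m) auto
      thus "Re (cnj s * (h m - 1)) > 0" using invl[of k] by (simp add: h_def)
    qed
    have rec: "\<forall>m\<ge>2. h m = Tm s \<beta> m (h (m-1))"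
    proof (intro allI impI)
      fix m :: nat assume "m \<ge> 2"
      then obtain k where k: "m = Suc (Suc k)" by (metis add_2_eq_Suc le_Suc_ex)
      have p0: "p k \<noteq> 0" and p1: "p (Suc k) \<noteq> 0" and p2: "p (Suc (Suc k)) \<noteq> 0"
        using invl[of k] invl[of "Suc k"] by auto
      have tt: "of_nat (Suc (Suc k)) * p (Suc (Suc k)) = (2 * of_nat k + 3 + b - z) * p (Suc k) - (of_nat k + 1 + b) * p k"
        unfolding p_def by (rule three_term)
      have "Tm s \<beta> m (h (m-1)) = ((2 * of_nat k + 3 + b - z) - (of_nat k + 1 + b) / (p (Suc k) / p k)) / of_nat (Suc (Suc k))"
        unfolding Tm_def k h_def s2 by (simp add: b_def algebra_simps)
      also have "\<dots> = p (Suc (Suc k)) / p (Suc k)"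
      proof -
        have nz: "(of_nat (Suc (Suc k)) :: complex) \<noteq> 0" by (rule of_nat_neq_0)
        have "(2 * of_nat k + 3 + b - z) - (of_nat k + 1 + b) / (p (Suc k) / p k)
            = ((2 * of_nat k + 3 + b - z) * p (Suc k) - (of_nat k + 1 + b) * p k) / p (Suc k)"
          using p0 p1 by (simp add: field_simps)
        also have "\<dots> = of_nat (Suc (Suc k)) * p (Suc (Suc k)) / p (Suc k)" by (simp only: tt)
        finally show ?thesis using nz by simp
      qed
      finally show "h m = Tm s \<beta> m (h (m-1))" by (simp add: h_def k)
    qed
    note est = est_fixed[OF \<beta> sig S1 sRe sS inv rec]
    have n1: "n \<ge> Nc \<sigma> S \<beta>" "n > 0" using nN by auto
    have E: "cmod (1 - 1 / h n - s * of_real (1 / sqrt (real n))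
            - (of_real (\<beta>/2 - 1/4) - s^2/2) * of_real (1 / real n)) \<le> Cfin \<sigma> S \<beta> * (1 / sqrt (real n))^3"
      using est n1 by blast
    obtain k where k: "n = Suc k" using n1 by (cases n) auto
    have pk: "p k \<noteq> 0" "p n \<noteq> 0" using invl[of k] k by auto
    have L1: "laguerre n (\<alpha> + 1) z = p n"
      using laguerre_PL[of "\<alpha> + 1" n z] assms(1) by (simp add: p_def b_def \<beta>_def)
    have L0: "laguerre n \<alpha> z = p n - p k"
    proof -
      have "laguerre n \<alpha> z = PL (of_real \<alpha>) (Suc k) z" using laguerre_PL[OF assms(1)] k by simp
      also have "\<dots> = PL (of_real \<alpha> + 1) (Suc k) z - PL (of_real \<alpha> + 1) k z" by (rule PL_diff[symmetric])
      also have "of_real \<alpha> + 1 = b" by (simp add: b_def \<beta>_def)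
      finally show ?thesis by (simp add: p_def k)
    qed
    have R: "laguerre n \<alpha> z / laguerre n (\<alpha> + 1) z = 1 - 1 / h n"
      unfolding L0 L1 h_def using pk k by (simp add: field_simps)
    have Q: "csqrt (- z / of_nat n) = s * of_real (1 / sqrt (real n))"
      by (rule csqrt_div[OF sRe0 s2 n1(2)])
    have T: "(complex_of_real (\<alpha> / 2 + 1 / 4) + z / 2) / of_nat n
        = (of_real (\<beta>/2 - 1/4) - s^2/2) * of_real (1 / real n)"
      unfolding s2 using n1(2) by (simp add: \<beta>_def field_simps)
    show "cmod (laguerre n \<alpha> z / laguerre n (\<alpha> + 1) z - csqrt (- z / of_nat n)
            - (complex_of_real (\<alpha> / 2 + 1 / 4) + z / 2) / of_nat n) \<le> Cfin \<sigma> S \<beta> * real n powr (- 3 / 2)"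
      unfolding R Q T powr_conv[OF n1(2), symmetric] by (rule E)
  qed
qed
end
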